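(* Let $k$ be a field of characteristic $\neq 2$, let $\mathfrak g$ be a central simple finite-dimensional Lie algebra over $k$, and let $A$ be a unital commutative associative $k$-algebra. Then every ideal of $\mathfrak g\otimes_k A$ is closed.
   Context: An ideal $\mathfrak a$ of a Lie algebra $L$ is closed if $Z(\mathfrak a):=\{x\in L:[x,L]\subseteq\mathfrak a\}$ equals $\mathfrak a$ (equivalently, $L/\mathfrak a$ has trivial center). $\mathfrak g\otimes_k A$ has bracket $[a\otimes f,b\otimes g]=[a,b]\otimes fg$. *)

theory Defs
  imports Main "HOL.Vector_Spaces" "HOL-Library.Function_Algebras"
begin

definition lie_algebra :: "('k::field \<Rightarrow> 'g::ab_group_add \<Rightarrow> 'g) \<Rightarrow> ('g \<Rightarrow> 'g \<Rightarrow> 'g) \<Rightarrow> bool" where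
  "lie_algebra sg br \<longleftrightarrow> vector_space sg \<and>
     (\<forall>x y z. br (x + y) z = br x z + br y z) \<and>
     (\<forall>x y z. br x (y + z) = br x y + br x z) \<and>
     (\<forall>c x y. br (sg c x) y = sg c (br x y)) \<and>
     (\<forall>c x y. br x (sg c y) = sg c (br x y)) \<and>
     (\<forall>x. br x x = 0) \<and>
     (\<forall>x y z. br x (br y z) + br y (br z x) + br z (br x y) = 0)"

definition finite_dim :: "('k::field \<Rightarrow> 'g::ab_group_add \<Rightarrow> 'g) \<Rightarrow> bool" where
  "finite_dim sg \<longleftrightarrow> (\<exists>B. finite B \<and> module.span sg B = UNIV)"

definition lie_ideal ::
  "'l set \<Rightarrow> ('l \<Rightarrow> 'l \<Rightarrow> 'l) \<Rightarrow> ('k \<Rightarrow> 'l \<Rightarrow> 'l) \<Rightarrow> ('l \<Rightarrow> 'l \<Rightarrow> 'l) \<Rightarrow> 'l \<Rightarrow> 'l set \<Rightarrow> bool" where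
  "lie_ideal L add sc br z I \<longleftrightarrow> I \<subseteq> L \<and> z \<in> I \<and>
     (\<forall>x\<in>I. \<forall>y\<in>I. add x y \<in> I) \<and> (\<forall>c. \<forall>x\<in>I. sc c x \<in> I) \<and>
     (\<forall>x\<in>I. \<forall>y\<in>L. br x y \<in> I \<and> br y x \<in> I)"

definition lie_Z :: "'l set \<Rightarrow> ('l \<Rightarrow> 'l \<Rightarrow> 'l) \<Rightarrow> 'l set \<Rightarrow> 'l set" where
  "lie_Z L br I = {x \<in> L. \<forall>y\<in>L. br x y \<in> I}"

definition closed_ideal :: "'l set \<Rightarrow> ('l \<Rightarrow> 'l \<Rightarrow> 'l) \<Rightarrow> 'l set \<Rightarrow> bool" where
  "closed_ideal L br I \<longleftrightarrow> lie_Z L br I = I"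

definition simple_lie :: "('k::field \<Rightarrow> 'g::ab_group_add \<Rightarrow> 'g) \<Rightarrow> ('g \<Rightarrow> 'g \<Rightarrow> 'g) \<Rightarrow> bool" where
  "simple_lie sg br \<longleftrightarrow> (\<exists>x y. br x y \<noteq> 0) \<and>
     (\<forall>I. lie_ideal UNIV (+) sg br 0 I \<longrightarrow> I = {0} \<or> I = UNIV)"

definition central_lie :: "('k::field \<Rightarrow> 'g::ab_group_add \<Rightarrow> 'g) \<Rightarrow> ('g \<Rightarrow> 'g \<Rightarrow> 'g) \<Rightarrow> bool" where
  "central_lie sg br \<longleftrightarrow> (\<forall>\<chi>. Vector_Spaces.linear sg sg \<chi> \<and> (\<forall>x y. \<chi> (br x y) = br x (\<chi> y))
       \<longrightarrow> (\<exists>c. \<forall>x. \<chi> x = sg c x))"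

definition central_simple_lie :: "('k::field \<Rightarrow> 'g::ab_group_add \<Rightarrow> 'g) \<Rightarrow> ('g \<Rightarrow> 'g \<Rightarrow> 'g) \<Rightarrow> bool" where
  "central_simple_lie sg br \<longleftrightarrow> simple_lie sg br \<and> central_lie sg br"

definition k_algebra :: "('k::field \<Rightarrow> 'a::comm_ring_1 \<Rightarrow> 'a) \<Rightarrow> bool" where
  "k_algebra sa \<longleftrightarrow> vector_space sa \<and> (\<forall>c a b. sa c (a * b) = sa c a * b)"

section \<open>The tensor product g \<otimes>_k A, constructed as free vector space on g \<times> A modulo bilinearity\<close>

definition fscale :: "'k::field \<Rightarrow> ('b \<Rightarrow> 'k) \<Rightarrow> ('b \<Rightarrow> 'k)" where
  "fscale c f = (\<lambda>p. c * f p)"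

definition fsupp :: "('b \<Rightarrow> 'k::zero) \<Rightarrow> 'b set" where
  "fsupp f = {p. f p \<noteq> 0}"

definition delta :: "'b \<Rightarrow> 'b \<Rightarrow> 'k::{zero,one}" where
  "delta p = (\<lambda>q. if q = p then 1 else 0)"

definition tensor_rels ::
  "('k::field \<Rightarrow> 'g::ab_group_add \<Rightarrow> 'g) \<Rightarrow> ('k \<Rightarrow> 'a::comm_ring_1 \<Rightarrow> 'a) \<Rightarrow> ('g \<times> 'a \<Rightarrow> 'k) set" where
  "tensor_rels sg sa =
     {delta (x + y, a) - delta (x, a) - delta (y, a) | x y a. True} \<union>
     {delta (x, a + b) - delta (x, a) - delta (x, b) | x a b. True} \<union>
     {delta (sg c x, a) - fscale c (delta (x, a)) | c x a. True} \<union>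
     {delta (x, sa c a) - fscale c (delta (x, a)) | c x a. True}"

definition tensor_R ::
  "('k::field \<Rightarrow> 'g::ab_group_add \<Rightarrow> 'g) \<Rightarrow> ('k \<Rightarrow> 'a::comm_ring_1 \<Rightarrow> 'a) \<Rightarrow> ('g \<times> 'a \<Rightarrow> 'k) set" where
  "tensor_R sg sa = module.span fscale (tensor_rels sg sa)"

definition tcls ::
  "('k::field \<Rightarrow> 'g::ab_group_add \<Rightarrow> 'g) \<Rightarrow> ('k \<Rightarrow> 'a::comm_ring_1 \<Rightarrow> 'a) \<Rightarrow> ('g \<times> 'a \<Rightarrow> 'k) \<Rightarrow> ('g \<times> 'a \<Rightarrow> 'k) set" where
  "tcls sg sa f = {h. h - f \<in> tensor_R sg sa}"

definition tensor_carrier ::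
  "('k::field \<Rightarrow> 'g::ab_group_add \<Rightarrow> 'g) \<Rightarrow> ('k \<Rightarrow> 'a::comm_ring_1 \<Rightarrow> 'a) \<Rightarrow> ('g \<times> 'a \<Rightarrow> 'k) set set" where
  "tensor_carrier sg sa = {tcls sg sa f | f. finite (fsupp f)}"

definition trep :: "('b \<Rightarrow> 'k) set \<Rightarrow> ('b \<Rightarrow> 'k)" where
  "trep C = (SOME f. f \<in> C)"

definition tadd ::
  "('k::field \<Rightarrow> 'g::ab_group_add \<Rightarrow> 'g) \<Rightarrow> ('k \<Rightarrow> 'a::comm_ring_1 \<Rightarrow> 'a) \<Rightarrow>
   ('g \<times> 'a \<Rightarrow> 'k) set \<Rightarrow> ('g \<times> 'a \<Rightarrow> 'k) set \<Rightarrow> ('g \<times> 'a \<Rightarrow> 'k) set" where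
  "tadd sg sa C D = tcls sg sa (trep C + trep D)"

definition tsc ::
  "('k::field \<Rightarrow> 'g::ab_group_add \<Rightarrow> 'g) \<Rightarrow> ('k \<Rightarrow> 'a::comm_ring_1 \<Rightarrow> 'a) \<Rightarrow>
   'k \<Rightarrow> ('g \<times> 'a \<Rightarrow> 'k) set \<Rightarrow> ('g \<times> 'a \<Rightarrow> 'k) set" where
  "tsc sg sa c C = tcls sg sa (fscale c (trep C))"

definition tzero ::
  "('k::field \<Rightarrow> 'g::ab_group_add \<Rightarrow> 'g) \<Rightarrow> ('k \<Rightarrow> 'a::comm_ring_1 \<Rightarrow> 'a) \<Rightarrow> ('g \<times> 'a \<Rightarrow> 'k) set" where
  "tzero sg sa = tcls sg sa 0"

text \<open>Bracket on formal sums: bilinear extension of [x (x) a, y (x) b] = [x,y] (x) ab.\<close>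
definition fbr :: "('g \<Rightarrow> 'g \<Rightarrow> 'g) \<Rightarrow> ('g \<times> 'a::comm_ring_1 \<Rightarrow> 'k::field) \<Rightarrow> ('g \<times> 'a \<Rightarrow> 'k) \<Rightarrow> ('g \<times> 'a \<Rightarrow> 'k)" where
  "fbr br f h = (\<Sum>p\<in>fsupp f. \<Sum>q\<in>fsupp h.
      fscale (f p * h q) (delta (br (fst p) (fst q), snd p * snd q)))"

definition tbr ::
  "('k::field \<Rightarrow> 'g::ab_group_add \<Rightarrow> 'g) \<Rightarrow> ('k \<Rightarrow> 'a::comm_ring_1 \<Rightarrow> 'a) \<Rightarrow> ('g \<Rightarrow> 'g \<Rightarrow> 'g) \<Rightarrow>
   ('g \<times> 'a \<Rightarrow> 'k) set \<Rightarrow> ('g \<times> 'a \<Rightarrow> 'k) set \<Rightarrow> ('g \<times> 'a \<Rightarrow> 'k) set" where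
  "tbr sg sa br C D = tcls sg sa (fbr br (trep C) (trep D))"

end

theory Submission
  imports Defs
begin



locale LA =
  fixes sg :: "'k::field \<Rightarrow> 'g::ab_group_add \<Rightarrow> 'g"
    and br :: "'g \<Rightarrow> 'g \<Rightarrow> 'g"
  assumes lie: "lie_algebra sg br"
begin

lemma vs: "vector_space sg" using lie unfolding lie_algebra_def by blast

sublocale V: vector_space sg by (rule vs)

lemma br_addL: "br (x + y) z = br x z + br y z" using lie unfolding lie_algebra_def by blast
lemma br_addR: "br x (y + z) = br x y + br x z" using lie unfolding lie_algebra_def by blast
lemma br_scL: "br (sg c x) y = sg c (br x y)" using lie unfolding lie_algebra_def by blast
lemma br_scR: "br x (sg c y) = sg c (br x y)" using lie unfolding lie_algebra_def by blast
lemma br_self: "br x x = 0" using lie unfolding lie_algebra_def by blast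

lemma br_0L[simp]: "br 0 y = 0" using br_addL[of 0 0 y] by simp
lemma br_0R[simp]: "br x 0 = 0" using br_addR[of x 0 0] by simp
lemma br_negL: "br (- x) y = - br x y" using br_addL[of x "-x" y] by (simp add: eq_neg_iff_add_eq_0 add.commute)
lemma br_negR: "br x (- y) = - br x y" using br_addR[of x y "-y"] by (simp add: eq_neg_iff_add_eq_0 add.commute)
lemma br_anti: "br x y = - br y x"
proof -
  have "br (x+y) (x+y) = 0" by (rule br_self)
  hence "br x x + br x y + (br y x + br y y) = 0" by (simp add: br_addL br_addR add_ac)
  hence "br x y + br y x = 0" by (simp add: br_self)
  thus ?thesis by (simp add: eq_neg_iff_add_eq_0)
qed
lemma sg_m1: "sg (-1) x = - x"
  by (metis V.scale_minus_left V.scale_one)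

lemma linI: assumes "\<And>x y. T (x + y) = T x + T y" "\<And>c x. T (sg c x) = sg c (T x)"
  shows "Vector_Spaces.linear sg sg T"
  unfolding Vector_Spaces.linear_def module_hom_def using vs assms
  by (auto simp: module_iff_vector_space module_hom_axioms_def)

inductive_set N :: "('g \<Rightarrow> 'g) set" where
  base: "(\<lambda>v. br y v) \<in> N"
| comp: "T \<in> N \<Longrightarrow> (\<lambda>v. br y (T v)) \<in> N"
| add: "T \<in> N \<Longrightarrow> S \<in> N \<Longrightarrow> (\<lambda>v. T v + S v) \<in> N"
| scal: "T \<in> N \<Longrightarrow> (\<lambda>v. sg c (T v)) \<in> N"

lemma N_add: "T \<in> N \<Longrightarrow> T (x + y) = T x + T y"
  by (induction T rule: N.induct) (auto simp: br_addR V.scale_right_distrib algebra_simps)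
lemma N_sc: "T \<in> N \<Longrightarrow> T (sg c x) = sg c (T x)"
  by (induction T rule: N.induct) (auto simp: br_scR V.scale_right_distrib V.scale_left_commute)
lemma N_lin: "T \<in> N \<Longrightarrow> Vector_Spaces.linear sg sg T"
  by (rule linI) (auto simp: N_add N_sc)
lemma N_0: "T \<in> N \<Longrightarrow> T 0 = 0"
  using N_add[of T 0 0] by simp
lemma N_diff: "T \<in> N \<Longrightarrow> T (x - y) = T x - T y"
  by (metis N_add add_diff_cancel diff_add_cancel)

lemma N_compose: "S \<in> N \<Longrightarrow> T \<in> N \<Longrightarrow> (\<lambda>v. S (T v)) \<in> N"
  by (induction S rule: N.induct) (auto intro: N.intros)

lemma N_minus: "T \<in> N \<Longrightarrow> S \<in> N \<Longrightarrow> (\<lambda>v. T v - S v) \<in> N"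
  using N.add[OF _ N.scal[of S "-1"], of T] by (simp add: sg_m1)

lemma ideal_triv:
  assumes cs: "simple_lie sg br" and "lie_ideal UNIV (+) sg br 0 J"
  shows "J = {0} \<or> J = UNIV"
  using assms unfolding simple_lie_def by blast

lemma orbit:
  assumes cs: "simple_lie sg br"
    and J1: "\<And>T y. T \<in> J \<Longrightarrow> (\<lambda>v. br y (T v)) \<in> J"
    and J2: "\<And>T S. T \<in> J \<Longrightarrow> S \<in> J \<Longrightarrow> (\<lambda>v. T v + S v) \<in> J"
    and J3: "\<And>T c. T \<in> J \<Longrightarrow> (\<lambda>v. sg c (T v)) \<in> J"
    and ne: "T0 \<in> J"
  shows "{T a | T. T \<in> J} = {0} \<or> {T a | T. T \<in> J} = UNIV"
proof (rule ideal_triv[OF cs])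
  let ?O = "{T a | T. T \<in> J}"
  have z: "0 \<in> ?O" using J3[OF ne, of 0] by force
  have a: "x + y \<in> ?O" if "x \<in> ?O" "y \<in> ?O" for x y using that J2 by force
  have s: "sg c x \<in> ?O" if "x \<in> ?O" for c x using that J3 by force
  have b1: "br y x \<in> ?O" if "x \<in> ?O" for x y using that J1 by force
  have b2: "br x y \<in> ?O" if "x \<in> ?O" for x y
    using s[OF b1[OF that, of y], of "-1"] by (simp add: sg_m1 br_anti[of x y])
  show "lie_ideal UNIV (+) sg br 0 ?O"
    unfolding lie_ideal_def
    by (intro conjI ballI allI; (rule z)?; (rule a; assumption)?; (rule s; assumption)?; (rule b1; assumption)?; (rule b2; assumption)?) simp
qed


lemma N_kill_span: assumes T: "T \<in> N" and k: "\<forall>s\<in>S. T s = 0" and x: "x \<in> V.span S"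
  shows "T x = 0"
  using x by (induction rule: V.span_induct_alt) (auto simp: N_0[OF T] N_add[OF T] N_sc[OF T] k)

lemma N_fix_span: assumes T: "T \<in> N" and k: "\<forall>s\<in>S. T s = s" and x: "x \<in> V.span S"
  shows "T x = x"
  using x by (induction rule: V.span_induct_alt) (auto simp: N_0[OF T] N_add[OF T] N_sc[OF T] k)

inductive_set N2 :: "('g \<Rightarrow> 'g) set" where
  rbase: "(\<lambda>v. br v z) \<in> N2"
| comp: "T \<in> N2 \<Longrightarrow> (\<lambda>v. br y (T v)) \<in> N2"
| add: "T \<in> N2 \<Longrightarrow> S \<in> N2 \<Longrightarrow> (\<lambda>v. T v + S v) \<in> N2"
| scal: "T \<in> N2 \<Longrightarrow> (\<lambda>v. sg c (T v)) \<in> N2"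

lemma N_N2: "T \<in> N \<Longrightarrow> T \<in> N2"
proof (induction T rule: N.induct)
  case (base y)
  have "(\<lambda>v. br v (- y)) \<in> N2" by (rule N2.rbase)
  moreover have "(\<lambda>v. br v (- y)) = (\<lambda>v. br y v)"
    by (rule ext) (simp add: br_negR br_anti[of _ y])
  ultimately show ?case by simp
qed (auto intro: N2.intros)

end

locale CS = LA +
  assumes cs: "central_simple_lie sg br"
begin

lemma simple: "simple_lie sg br" using cs unfolding central_simple_lie_def by blast
lemma central: "central_lie sg br" using cs unfolding central_simple_lie_def by blast

lemma center_zero: assumes "\<forall>y. br y u = 0" shows "u = 0"
proof -
  let ?Z = "{v. \<forall>y. br y v = 0}"
  have sw: "br v y = 0" if "\<forall>y. br y v = 0" for v y
    using that br_anti[of v y] by simp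
  have "lie_ideal UNIV (+) sg br 0 ?Z" unfolding lie_ideal_def
    using sw by (auto simp: br_addR br_scR)
  hence "?Z = {0} \<or> ?Z = UNIV" by (rule ideal_triv[OF simple])
  moreover have "?Z \<noteq> UNIV"
  proof
    assume "?Z = UNIV"
    hence "\<forall>x y. br x y = 0" by (metis (mono_tags, lifting) UNIV_I mem_Collect_eq)
    thus False using simple unfolding simple_lie_def by blast
  qed
  ultimately show ?thesis using assms by blast
qed

lemma N_orbit_UNIV: assumes "w \<noteq> 0" shows "{T w | T. T \<in> N} = UNIV"
proof -
  have "{T w | T. T \<in> N} = {0} \<or> {T w | T. T \<in> N} = UNIV"
    by (rule orbit[OF simple, of N, OF _ _ _ N.base[of 0]]) (auto intro: N.intros)
  moreover have "{T w | T. T \<in> N} \<noteq> {0}"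
  proof
    assume "{T w | T. T \<in> N} = {0}"
    hence "\<forall>y. br y w = 0" using N.base by blast
    thus False using center_zero assms by blast
  qed
  ultimately show ?thesis by blast
qed

lemma D: "finite S \<Longrightarrow> u \<notin> V.span S \<Longrightarrow> \<exists>T\<in>N. (\<forall>s\<in>S. T s = 0) \<and> T u \<noteq> 0"
proof (induction S arbitrary: u rule: finite_induct)
  case empty
  hence "u \<noteq> 0" by simp
  then obtain y where "br y u \<noteq> 0" using center_zero by blast
  thus ?case using N.base by blast
next
  case (insert a S)
  show ?case
  proof (cases "a \<in> V.span S")
    case True
    hence "V.span (insert a S) = V.span S" by (rule V.span_redundant)
    with insert.prems obtain T where T: "T \<in> N" "\<forall>s\<in>S. T s = 0" "T u \<noteq> 0"
      using insert.IH by blast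
    have "T a = 0" using N_kill_span[OF T(1,2) True] .
    with T show ?thesis by auto
  next
    case False
    define J where "J = {T\<in>N. \<forall>s\<in>S. T s = 0}"
    obtain T1 where T1: "T1 \<in> J" "T1 a \<noteq> 0" using insert.IH[OF False] unfolding J_def by blast
    have Jc: "\<And>T y. T \<in> J \<Longrightarrow> (\<lambda>v. br y (T v)) \<in> J"
       "\<And>T S. T \<in> J \<Longrightarrow> S \<in> J \<Longrightarrow> (\<lambda>v. T v + S v) \<in> J"
       "\<And>T c. T \<in> J \<Longrightarrow> (\<lambda>v. sg c (T v)) \<in> J"
       "\<And>T S. T \<in> J \<Longrightarrow> S \<in> J \<Longrightarrow> (\<lambda>v. T v - S v) \<in> J"
      unfolding J_def
      subgoal by (auto intro: N.comp)
      subgoal by (auto intro: N.add)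
      subgoal by (auto intro: N.scal)
      subgoal for T S by (auto intro: N_minus[of T S])
      done
    have O: "{T a | T. T \<in> J} = {0} \<or> {T a | T. T \<in> J} = UNIV"
      by (rule orbit[OF simple, of J, OF Jc(1-3) T1(1)])
    have OU: "\<exists>T\<in>J. T a = w" for w
    proof -
      have "{T a | T. T \<in> J} \<noteq> {0}" using T1 by blast
      with O have "w \<in> {T a | T. T \<in> J}" by blast
      thus ?thesis by blast
    qed
    show ?thesis
    proof (rule ccontr)
      assume "\<not> ?thesis"
      hence H: "\<And>T. T \<in> J \<Longrightarrow> T a = 0 \<Longrightarrow> T u = 0" unfolding J_def by auto
      have JN: "T \<in> J \<Longrightarrow> T \<in> N" for T unfolding J_def by blast
      have well: "T u = T' u" if "T \<in> J" "T' \<in> J" "T a = T' a" for T T'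
      proof -
        have "(\<lambda>v. T v - T' v) u = 0" by (rule H[OF Jc(4)[OF that(1,2)]]) (simp add: that(3))
        thus ?thesis by simp
      qed
      define phi where "phi w = (SOME T. T \<in> J \<and> T a = w) u" for w
      have phi: "phi (T a) = T u" if "T \<in> J" for T
      proof -
        have "(SOME T'. T' \<in> J \<and> T' a = T a) \<in> J \<and> (SOME T'. T' \<in> J \<and> T' a = T a) a = T a"
          by (rule someI[of _ T]) (simp add: that)
        thus ?thesis unfolding phi_def using well that by metis
      qed
      have lin: "Vector_Spaces.linear sg sg phi"
      proof (rule linI)
        fix x y
        obtain T T' where "T \<in> J" "T a = x" "T' \<in> J" "T' a = y" using OU by metis
        thus "phi (x + y) = phi x + phi y" using phi[OF Jc(2)] phi by force
      next
        fix c x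
        obtain T where "T \<in> J" "T a = x" using OU by metis
        thus "phi (sg c x) = sg c (phi x)" using phi[OF Jc(3)] phi by force
      qed
      have com: "phi (br x y) = br x (phi y)" for x y
      proof -
        obtain T where "T \<in> J" "T a = y" using OU by metis
        thus ?thesis using phi[OF Jc(1)] phi by force
      qed
      obtain c where c: "\<And>x. phi x = sg c x" using central lin com unfolding central_lie_def by blast
      have kill: "T (u - sg c a) = 0" if "T \<in> J" for T
      proof -
        have "T (u - sg c a) = T u - sg c (T a)" using JN[OF that] by (simp add: N_diff N_sc)
        also have "T u = sg c (T a)" using phi[OF that] c by simp
        finally show ?thesis by simp
      qed
      have "u - sg c a \<in> V.span S"
      proof (rule ccontr)
        assume "u - sg c a \<notin> V.span S"
        from insert.IH[OF this] obtain T where "T \<in> N" "\<forall>s\<in>S. T s = 0" "T (u - sg c a) \<noteq> 0" by blast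
        thus False using kill unfolding J_def by blast
      qed
      hence "u \<in> V.span (insert a S)" using V.span_breakdown_eq by blast
      thus False using insert.prems by blast
    qed
  qed
qed

lemma P: "finite S \<Longrightarrow> \<exists>T\<in>N. \<forall>s\<in>S. T s = s"
proof (induction S rule: finite_induct)
  case empty
  show ?case using N.base by blast
next
  case (insert u S)
  then obtain T where T: "T \<in> N" "\<forall>s\<in>S. T s = s" by blast
  show ?case
  proof (cases "u \<in> V.span S")
    case True
    have "T u = u" by (rule N_fix_span[OF T True])
    thus ?thesis using T by blast
  next
    case False
    obtain T0 where T0: "T0 \<in> N" "\<forall>s\<in>S. T0 s = 0" "T0 u \<noteq> 0" using D[OF insert(1) False] by blast
    have "u \<in> {R (T0 u) | R. R \<in> N}" using N_orbit_UNIV[OF T0(3)] by simp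
    hence "\<exists>R. u = R (T0 u) \<and> R \<in> N" by (simp only: mem_Collect_eq)
    then obtain S' where S': "S' \<in> N" "S' (T0 u) = u" by metis
    define E where "E = (\<lambda>v. S' (T0 v))"
    have E: "E \<in> N" unfolding E_def by (rule N_compose[OF S'(1) T0(1)])
    have S0: "S' 0 = 0" by (rule N_0[OF S'(1)])
    have Es: "\<forall>s\<in>S. E s = 0" "E u = u" unfolding E_def using T0(2) S'(2) S0 by simp_all
    have T00: "T 0 = 0" by (rule N_0[OF T(1)])
    define T' where "T' = (\<lambda>v. E v + T v - T (E v))"
    have "T' \<in> N" unfolding T'_def
      using N_minus[OF N.add[OF E T(1)] N_compose[OF T(1) E]] by simp
    moreover have "\<forall>s\<in>insert u S. T' s = s" unfolding T'_def using Es T(2) T00 by simp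
    ultimately show ?thesis by blast
  qed
qed

lemma id_N: assumes "finite_dim sg" shows "(\<lambda>v. v) \<in> N"
proof -
  obtain B where B: "finite B" "V.span B = UNIV" using assms unfolding finite_dim_def by blast
  obtain T where T: "T \<in> N" "\<forall>s\<in>B. T s = s" using P[OF B(1)] by blast
  have "T = (\<lambda>v. v)" proof fix x show "T x = x" using N_fix_span[OF T, of x] B(2) by simp qed
  thus ?thesis using T by simp
qed

end




lemma fscale_apply: "fscale c f p = c * f p" by (simp add: fscale_def)

lemma vs_fscale: "vector_space (fscale :: 'k::field \<Rightarrow> ('b \<Rightarrow> 'k) \<Rightarrow> ('b \<Rightarrow> 'k))"
  by unfold_locales (auto simp: fscale_def algebra_simps)

interpretation F: vector_space "fscale :: 'k::field \<Rightarrow> ('b \<Rightarrow> 'k) \<Rightarrow> ('b \<Rightarrow> 'k)"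
  by (rule vs_fscale)

lemma sum_apply: "(sum F A) x = sum (\<lambda>i. F i x) A"
  by (induction A rule: infinite_finite_induct) auto

lemma fscale_zero[simp]: "fscale 0 f = 0" by (rule ext) (simp add: fscale_apply)
lemma fscale_one[simp]: "fscale 1 f = f" by (rule ext) (simp add: fscale_apply)

lemma fsupp_add: "fsupp (f + g) \<subseteq> fsupp f \<union> fsupp (g :: 'b \<Rightarrow> 'k::ab_group_add)" by (auto simp: fsupp_def)
lemma fsupp_diff: "fsupp (f - g) \<subseteq> fsupp f \<union> fsupp (g :: 'b \<Rightarrow> 'k::ab_group_add)" by (auto simp: fsupp_def)
lemma fsupp_fscale: "fsupp (fscale c f) \<subseteq> fsupp f" by (auto simp: fsupp_def fscale_apply)
lemma fsupp_delta[simp]: "fsupp (delta p :: 'b \<Rightarrow> 'k::zero_neq_one) = {p}" by (auto simp: fsupp_def delta_def)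
lemma fsupp_zero[simp]: "fsupp 0 = {}" by (auto simp: fsupp_def)
lemma fsupp_zero'[simp]: "fsupp (\<lambda>a. 0) = {}" by (auto simp: fsupp_def)

lemma fin_add: "finite (fsupp f) \<Longrightarrow> finite (fsupp g) \<Longrightarrow> finite (fsupp (f + (g :: 'b \<Rightarrow> 'k::ab_group_add)))"
  by (rule finite_subset[OF fsupp_add]) simp
lemma fin_diff: "finite (fsupp f) \<Longrightarrow> finite (fsupp g) \<Longrightarrow> finite (fsupp (f - (g :: 'b \<Rightarrow> 'k::ab_group_add)))"
  by (rule finite_subset[OF fsupp_diff]) simp
lemma fin_fscale: "finite (fsupp f) \<Longrightarrow> finite (fsupp (fscale c f))"
  by (meson finite_subset fsupp_fscale)
lemma fin_sum: "(\<And>i. i \<in> A \<Longrightarrow> finite (fsupp (G i))) \<Longrightarrow> finite (fsupp (sum (G :: 'i \<Rightarrow> 'b \<Rightarrow> 'k::ab_group_add) A))"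
  by (induction A rule: infinite_finite_induct) (auto intro!: fin_add)

lemma expand: assumes "finite (fsupp f)"
  shows "f = (\<Sum>p\<in>fsupp f. fscale (f p) (delta p :: 'b \<Rightarrow> 'k::field))"
proof (rule ext)
  fix x
  have "(\<Sum>p\<in>fsupp f. fscale (f p) (delta p :: 'b \<Rightarrow> 'k)) x = (\<Sum>p\<in>fsupp f. f p * delta p x)"
    by (simp add: sum_apply fscale_apply)
  also have "\<dots> = f x"
  proof (cases "x \<in> fsupp f")
    case True
    thus ?thesis using assms by (simp add: delta_def if_distrib cong: if_cong)
  next
    case False
    hence "f x = 0" by (simp add: fsupp_def)
    moreover have "\<forall>p\<in>fsupp f. f p * delta p x = 0" using False by (auto simp: delta_def)
    ultimately show ?thesis by (metis (no_types, lifting) sum.neutral)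
  qed
  finally show "f x = (\<Sum>p\<in>fsupp f. fscale (f p) (delta p :: 'b \<Rightarrow> 'k)) x" by simp
qed

lemma fbr_sup:
  fixes f :: "'g \<times> 'a::comm_ring_1 \<Rightarrow> 'k::field"
  assumes A: "finite A" "fsupp f \<subseteq> A" and B: "finite B" "fsupp h \<subseteq> B"
  shows "fbr br f h = (\<Sum>p\<in>A. \<Sum>q\<in>B. fscale (f p * h q) (delta (br (fst p) (fst q), snd p * snd q)))"
proof -
  have i: "(\<Sum>q\<in>fsupp h. fscale (f p * h q) (delta (br (fst p) (fst q), snd p * snd q)) :: 'g \<times> 'a \<Rightarrow> 'k)
      = (\<Sum>q\<in>B. fscale (f p * h q) (delta (br (fst p) (fst q), snd p * snd q)))" for p
    by (rule sum.mono_neutral_left[OF B(1) B(2)]) (auto simp: fsupp_def)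
  have "fbr br f h = (\<Sum>p\<in>fsupp f. \<Sum>q\<in>B. fscale (f p * h q) (delta (br (fst p) (fst q), snd p * snd q)))"
    unfolding fbr_def using i by simp
  also have "\<dots> = (\<Sum>p\<in>A. \<Sum>q\<in>B. fscale (f p * h q) (delta (br (fst p) (fst q), snd p * snd q)))"
    by (rule sum.mono_neutral_left[OF A(1) A(2)]) (auto simp: fsupp_def)
  finally show ?thesis .
qed

lemma fbr_swap: "fbr br f h = fbr (\<lambda>x y. br y x) h f"
  unfolding fbr_def by (subst sum.swap) (simp add: mult.commute)

lemma fbr_addL:
  fixes f1 :: "'g \<times> 'a::comm_ring_1 \<Rightarrow> 'k::field"
  assumes "finite (fsupp f1)" "finite (fsupp f2)" "finite (fsupp h)"
  shows "fbr br (f1 + f2) h = fbr br f1 h + fbr br f2 h"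
proof -
  let ?A = "fsupp f1 \<union> fsupp f2"
  have "fbr br (f1 + f2) h = (\<Sum>p\<in>?A. \<Sum>q\<in>fsupp h. fscale ((f1 + f2) p * h q) (delta (br (fst p) (fst q), snd p * snd q)))"
    using assms fsupp_add[of f1 f2] by (intro fbr_sup) auto
  also have "\<dots> = (\<Sum>p\<in>?A. \<Sum>q\<in>fsupp h. fscale (f1 p * h q) (delta (br (fst p) (fst q), snd p * snd q)))
     + (\<Sum>p\<in>?A. \<Sum>q\<in>fsupp h. fscale (f2 p * h q) (delta (br (fst p) (fst q), snd p * snd q)))"
    by (simp add: distrib_right F.scale_left_distrib sum.distrib)
  also have "\<dots> = fbr br f1 h + fbr br f2 h"
    by (subst (1 2) fbr_sup[where A="?A" and B="fsupp h"]) (use assms in auto)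
  finally show ?thesis .
qed

lemma fbr_scL:
  fixes f :: "'g \<times> 'a::comm_ring_1 \<Rightarrow> 'k::field"
  assumes "finite (fsupp f)" "finite (fsupp h)"
  shows "fbr br (fscale c f) h = fscale c (fbr br f h)"
proof -
  have "fbr br (fscale c f) h = (\<Sum>p\<in>fsupp f. \<Sum>q\<in>fsupp h. fscale ((fscale c f) p * h q) (delta (br (fst p) (fst q), snd p * snd q)))"
    using assms fsupp_fscale[of c f] by (intro fbr_sup) auto
  also have "\<dots> = fscale c (fbr br f h)"
    unfolding fbr_def by (simp add: F.scale_sum_right mult.assoc fscale_apply)
  finally show ?thesis .
qed

lemma fbr_0L[simp]: "fbr br 0 h = 0" by (simp add: fbr_def)
lemma fbr_0L'[simp]: "fbr br (\<lambda>a. 0) h = 0" by (simp add: fbr_def)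

lemma fbr_diffL:
  fixes f1 :: "'g \<times> 'a::comm_ring_1 \<Rightarrow> 'k::field"
  assumes "finite (fsupp f1)" "finite (fsupp f2)" "finite (fsupp h)"
  shows "fbr br (f1 - f2) h = fbr br f1 h - fbr br f2 h"
  using fbr_addL[of "f1 - f2" f2 h br] assms fin_diff[OF assms(1,2)] by (simp add: eq_diff_eq)

lemma fbr_addR:
  fixes f :: "'g \<times> 'a::comm_ring_1 \<Rightarrow> 'k::field"
  assumes "finite (fsupp h1)" "finite (fsupp h2)" "finite (fsupp f)"
  shows "fbr br f (h1 + h2) = fbr br f h1 + fbr br f h2"
  by (subst (1 2 3) fbr_swap) (rule fbr_addL[OF assms])

lemma fbr_scR:
  fixes f :: "'g \<times> 'a::comm_ring_1 \<Rightarrow> 'k::field"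
  assumes "finite (fsupp f)" "finite (fsupp h)"
  shows "fbr br f (fscale c h) = fscale c (fbr br f h)"
  by (subst (1 2) fbr_swap) (rule fbr_scL[OF assms(2,1)])

lemma fbr_diffR:
  fixes f :: "'g \<times> 'a::comm_ring_1 \<Rightarrow> 'k::field"
  assumes "finite (fsupp h1)" "finite (fsupp h2)" "finite (fsupp f)"
  shows "fbr br f (h1 - h2) = fbr br f h1 - fbr br f h2"
  by (subst (1 2 3) fbr_swap) (rule fbr_diffL[OF assms])

lemma fbr_sumR:
  fixes f :: "'g \<times> 'a::comm_ring_1 \<Rightarrow> 'k::field"
  assumes "finite S" "\<And>i. i \<in> S \<Longrightarrow> finite (fsupp (G i))" "finite (fsupp f)"
  shows "fbr br f (\<Sum>i\<in>S. fscale (c i) (G i)) = (\<Sum>i\<in>S. fscale (c i) (fbr br f (G i)))"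
  using assms
proof (induction S rule: finite_induct)
  case empty
  then show ?case by (simp add: fbr_def)
next
  case (insert x S)
  have fs: "finite (fsupp (\<Sum>i\<in>S. fscale (c i) (G i)))"
    by (rule fin_sum) (use insert fin_fscale in auto)
  have fx: "finite (fsupp (G x))" using insert by simp
  have "fbr br f (\<Sum>i\<in>insert x S. fscale (c i) (G i)) = fbr br f (fscale (c x) (G x) + (\<Sum>i\<in>S. fscale (c i) (G i)))"
    by (simp only: sum.insert[OF insert(1,2)])
  also have "\<dots> = fbr br f (fscale (c x) (G x)) + fbr br f (\<Sum>i\<in>S. fscale (c i) (G i))"
    by (rule fbr_addR[OF fin_fscale[OF fx] fs insert(5)])
  also have "\<dots> = fscale (c x) (fbr br f (G x)) + (\<Sum>i\<in>S. fscale (c i) (fbr br f (G i)))"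
  proof -
    have IH: "fbr br f (\<Sum>i\<in>S. fscale (c i) (G i)) = (\<Sum>i\<in>S. fscale (c i) (fbr br f (G i)))"
      by (rule insert.IH) (use insert.prems in auto)
    show ?thesis by (simp only: fbr_scR[OF insert(5) fx] IH)
  qed
  also have "\<dots> = (\<Sum>i\<in>insert x S. fscale (c i) (fbr br f (G i)))"
    by (simp only: sum.insert[OF insert(1,2)])
  finally show ?case .
qed

lemma fbr_delta:
  "fbr br (delta p) (delta q) = (delta (br (fst p) (fst q), snd p * snd q) :: 'g \<times> 'a::comm_ring_1 \<Rightarrow> 'k::field)"
  unfolding fbr_def fsupp_delta by (simp add: delta_def)




lemma rels_fin: "r \<in> tensor_rels sg sa \<Longrightarrow> finite (fsupp r)"
  unfolding tensor_rels_def by (auto intro!: fin_diff fin_fscale)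

lemma R_fin: "r \<in> tensor_R sg sa \<Longrightarrow> finite (fsupp r)"
  unfolding tensor_R_def
proof (induction rule: F.span_induct_alt)
  case base
  then show ?case by simp
next
  case (step c x y)
  then show ?case by (meson fin_add fin_fscale rels_fin)
qed

lemma rels_R: "r \<in> tensor_rels sg sa \<Longrightarrow> r \<in> tensor_R sg sa"
  unfolding tensor_R_def by (rule F.span_base)

lemma R_add: "r \<in> tensor_R sg sa \<Longrightarrow> s \<in> tensor_R sg sa \<Longrightarrow> r + s \<in> tensor_R sg sa"
  unfolding tensor_R_def by (rule F.span_add)
lemma R_diff: "r \<in> tensor_R sg sa \<Longrightarrow> s \<in> tensor_R sg sa \<Longrightarrow> r - s \<in> tensor_R sg sa"
  unfolding tensor_R_def by (rule F.span_diff)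
lemma R_sc: "r \<in> tensor_R sg sa \<Longrightarrow> fscale c r \<in> tensor_R sg sa"
  unfolding tensor_R_def by (rule F.span_scale)
lemma R_0: "0 \<in> tensor_R sg sa"
  unfolding tensor_R_def by (rule F.span_zero)
lemma R_sum: "(\<And>i. i \<in> A \<Longrightarrow> G i \<in> tensor_R sg sa) \<Longrightarrow> sum G A \<in> tensor_R sg sa"
  unfolding tensor_R_def by (rule F.span_sum)

lemma fin_delta: "finite (fsupp (delta p :: _ \<Rightarrow> 'k::field))" by simp

lemma fbr_rel_delta:
  fixes sg :: "'k::field \<Rightarrow> 'g::ab_group_add \<Rightarrow> 'g" and sa :: "'k \<Rightarrow> 'a::comm_ring_1 \<Rightarrow> 'a"
  assumes addL: "\<And>x y z. br (x + y) z = br x z + br y z"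
    and scL: "\<And>c x z. br (sg c x) z = sg c (br x z)"
    and alg: "k_algebra sa"
    and r: "r \<in> tensor_rels sg sa"
  shows "fbr br r (delta q) \<in> tensor_rels sg sa"
proof -
  have salg: "sa c a * b = sa c (a * b)" for c a b using alg unfolding k_algebra_def by simp
  note fd = fin_delta fin_diff fin_fscale
  from r show ?thesis unfolding tensor_rels_def
  proof (elim UnE CollectE exE conjE)
    fix x y a assume "r = delta (x + y, a) - delta (x, a) - delta (y, a)"
    hence "fbr br r (delta q) = delta (br x (fst q) + br y (fst q), a * snd q) - delta (br x (fst q), a * snd q) - delta (br y (fst q), a * snd q)"
      by (simp add: fbr_diffL fd fbr_delta addL)
    thus "fbr br r (delta q) \<in> {delta (x + y, a) - delta (x, a) - delta (y, a) |x y a. True} \<union>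
     {delta (x, a + b) - delta (x, a) - delta (x, b) |x a b. True} \<union>
     {delta (sg c x, a) - fscale c (delta (x, a)) |c x a. True} \<union>
     {delta (x, sa c a) - fscale c (delta (x, a)) |c x a. True}" by blast
  next
    fix x a b assume "r = delta (x, a + b) - delta (x, a) - delta (x, b)"
    hence "fbr br r (delta q) = delta (br x (fst q), a * snd q + b * snd q) - delta (br x (fst q), a * snd q) - delta (br x (fst q), b * snd q)"
      by (simp add: fbr_diffL fd fbr_delta distrib_right)
    thus "fbr br r (delta q) \<in> {delta (x + y, a) - delta (x, a) - delta (y, a) |x y a. True} \<union>
     {delta (x, a + b) - delta (x, a) - delta (x, b) |x a b. True} \<union>
     {delta (sg c x, a) - fscale c (delta (x, a)) |c x a. True} \<union>
     {delta (x, sa c a) - fscale c (delta (x, a)) |c x a. True}" by blast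
  next
    fix c x a assume "r = delta (sg c x, a) - fscale c (delta (x, a))"
    hence "fbr br r (delta q) = delta (sg c (br x (fst q)), a * snd q) - fscale c (delta (br x (fst q), a * snd q))"
      by (simp add: fbr_diffL fd fbr_delta scL fbr_scL)
    thus "fbr br r (delta q) \<in> {delta (x + y, a) - delta (x, a) - delta (y, a) |x y a. True} \<union>
     {delta (x, a + b) - delta (x, a) - delta (x, b) |x a b. True} \<union>
     {delta (sg c x, a) - fscale c (delta (x, a)) |c x a. True} \<union>
     {delta (x, sa c a) - fscale c (delta (x, a)) |c x a. True}" by blast
  next
    fix c x a assume "r = delta (x, sa c a) - fscale c (delta (x, a))"
    hence "fbr br r (delta q) = delta (br x (fst q), sa c (a * snd q)) - fscale c (delta (br x (fst q), a * snd q))"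
      by (simp add: fbr_diffL fd fbr_delta salg fbr_scL)
    thus "fbr br r (delta q) \<in> {delta (x + y, a) - delta (x, a) - delta (y, a) |x y a. True} \<union>
     {delta (x, a + b) - delta (x, a) - delta (x, b) |x a b. True} \<union>
     {delta (sg c x, a) - fscale c (delta (x, a)) |c x a. True} \<union>
     {delta (x, sa c a) - fscale c (delta (x, a)) |c x a. True}" by blast
  qed
qed

lemma fbr_R_left:
  fixes sg :: "'k::field \<Rightarrow> 'g::ab_group_add \<Rightarrow> 'g" and sa :: "'k \<Rightarrow> 'a::comm_ring_1 \<Rightarrow> 'a"
  assumes addL: "\<And>x y z. br (x + y) z = br x z + br y z"
    and scL: "\<And>c x z. br (sg c x) z = sg c (br x z)"
    and alg: "k_algebra sa"
    and r: "r \<in> tensor_R sg sa" and h: "finite (fsupp h)"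
  shows "fbr br r h \<in> tensor_R sg sa"
proof -
  have relh: "fbr br x h \<in> tensor_R sg sa" if x: "x \<in> tensor_rels sg sa" for x
  proof -
    have "fbr br x h = fbr br x (\<Sum>p\<in>fsupp h. fscale (h p) (delta p))"
      using expand[OF h] by simp
    also have "\<dots> = (\<Sum>p\<in>fsupp h. fscale (h p) (fbr br x (delta p)))"
      by (rule fbr_sumR) (use h rels_fin[OF x] in auto)
    also have "\<dots> \<in> tensor_R sg sa"
      by (intro R_sum R_sc rels_R fbr_rel_delta[OF addL scL alg x])
    finally show ?thesis .
  qed
  have "finite (fsupp r) \<and> fbr br r h \<in> tensor_R sg sa"
    using r unfolding tensor_R_def
  proof (induction rule: F.span_induct_alt)
    case base
    then show ?case using R_0[of sg sa] unfolding tensor_R_def by (simp add: zero_fun_def)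
  next
    case (step c x y)
    have fx: "finite (fsupp x)" using rels_fin[OF step(1)] .
    have fy: "finite (fsupp y)" using step(2) by blast
    have eq: "fbr br (fscale c x + y) h = fscale c (fbr br x h) + fbr br y h"
      by (simp only: fbr_addL[OF fin_fscale[OF fx] fy h] fbr_scL[OF fx h])
    moreover have "fscale c (fbr br x h) + fbr br y h \<in> tensor_R sg sa"
    proof (rule R_add)
      show "fscale c (fbr br x h) \<in> tensor_R sg sa" by (rule R_sc[OF relh[OF step(1)]])
      show "fbr br y h \<in> tensor_R sg sa" using step(2) unfolding tensor_R_def by simp
    qed
    ultimately have "fbr br (fscale c x + y) h \<in> F.span (tensor_rels sg sa)"
      unfolding tensor_R_def by (simp only:)
    thus ?case using fin_add[OF fin_fscale[OF fx] fy] by (rule conjI[rotated])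
  qed
  thus ?thesis by simp
qed

lemma fbr_R_right:
  fixes sg :: "'k::field \<Rightarrow> 'g::ab_group_add \<Rightarrow> 'g" and sa :: "'k \<Rightarrow> 'a::comm_ring_1 \<Rightarrow> 'a"
  assumes addR: "\<And>x y z. br z (x + y) = br z x + br z y"
    and scR: "\<And>c x z. br z (sg c x) = sg c (br z x)"
    and alg: "k_algebra sa"
    and r: "r \<in> tensor_R sg sa" and h: "finite (fsupp h)"
  shows "fbr br h r \<in> tensor_R sg sa"
  by (subst fbr_swap) (rule fbr_R_left[OF addR scR alg r h])




definition tl :: "('g \<Rightarrow> 'g) \<Rightarrow> ('g \<times> 'a \<Rightarrow> 'k::field) \<Rightarrow> ('g \<times> 'a \<Rightarrow> 'k)" where
  "tl T f = (\<Sum>q\<in>fsupp f. fscale (f q) (delta (T (fst q), snd q)))"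

lemma tl_fin: "finite (fsupp (tl T f))"
  unfolding tl_def by (intro fin_sum fin_fscale fin_delta)

lemma tl_id: "finite (fsupp f) \<Longrightarrow> tl (\<lambda>v. v) f = f"
  unfolding tl_def using expand[of f] by simp

lemma tcls_eq: "f - g \<in> tensor_R sg sa \<Longrightarrow> tcls sg sa f = tcls sg sa g"
  unfolding tcls_def
proof (intro Collect_cong iffI)
  fix h assume "f - g \<in> tensor_R sg sa"
  { assume "h - f \<in> tensor_R sg sa"
    from R_add[OF this \<open>f - g \<in> _\<close>] show "h - g \<in> tensor_R sg sa" by simp }
  { assume "h - g \<in> tensor_R sg sa"
    from R_diff[OF this \<open>f - g \<in> _\<close>] show "h - f \<in> tensor_R sg sa" by simp }
qed

lemma trep_tcls: "trep (tcls sg sa f) - f \<in> tensor_R sg sa"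
proof -
  have "f \<in> tcls sg sa f" unfolding tcls_def using R_0 by simp
  hence "trep (tcls sg sa f) \<in> tcls sg sa f" unfolding trep_def by (rule someI[of "\<lambda>h. h \<in> tcls sg sa f"])
  thus ?thesis unfolding tcls_def by simp
qed

lemma tadd_tcls: "tadd sg sa (tcls sg sa f) (tcls sg sa g) = tcls sg sa (f + g)"
  unfolding tadd_def
proof (rule tcls_eq)
  show "trep (tcls sg sa f) + trep (tcls sg sa g) - (f + g) \<in> tensor_R sg sa"
  proof -
    have e: "trep (tcls sg sa f) + trep (tcls sg sa g) - (f + g) = (trep (tcls sg sa f) - f) + (trep (tcls sg sa g) - g)"
      by (simp add: algebra_simps)
    show ?thesis unfolding e by (rule R_add[OF trep_tcls trep_tcls])
  qed
qed

lemma tsc_tcls: "tsc sg sa c (tcls sg sa f) = tcls sg sa (fscale c f)"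
  unfolding tsc_def
proof (rule tcls_eq)
  have "fscale c (trep (tcls sg sa f)) - fscale c f = fscale c (trep (tcls sg sa f) - f)"
    by (simp add: F.scale_right_diff_distrib)
  thus "fscale c (trep (tcls sg sa f)) - fscale c f \<in> tensor_R sg sa"
    using R_sc[OF trep_tcls] by simp
qed

locale TS = CS sg br
  for sg :: "'k::field \<Rightarrow> 'g::ab_group_add \<Rightarrow> 'g" and br +
  fixes sa :: "'k \<Rightarrow> 'a::comm_ring_1 \<Rightarrow> 'a"
    and I :: "('g \<times> 'a \<Rightarrow> 'k) set set"
  assumes alg: "k_algebra sa"
    and ideal: "lie_ideal (tensor_carrier sg sa) (tadd sg sa) (tsc sg sa) (tbr sg sa br) (tzero sg sa) I"
begin

lemma I_sub: "I \<subseteq> tensor_carrier sg sa" using ideal unfolding lie_ideal_def by blast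
lemma I_add: "x \<in> I \<Longrightarrow> y \<in> I \<Longrightarrow> tadd sg sa x y \<in> I" using ideal unfolding lie_ideal_def by blast
lemma I_sc: "x \<in> I \<Longrightarrow> tsc sg sa c x \<in> I" using ideal unfolding lie_ideal_def by blast
lemma I_brR: "x \<in> I \<Longrightarrow> y \<in> tensor_carrier sg sa \<Longrightarrow> tbr sg sa br x y \<in> I" using ideal unfolding lie_ideal_def by blast
lemma I_brL: "x \<in> I \<Longrightarrow> y \<in> tensor_carrier sg sa \<Longrightarrow> tbr sg sa br y x \<in> I" using ideal unfolding lie_ideal_def by blast

lemma tbr_tcls:
  assumes f: "finite (fsupp f)" and g: "finite (fsupp g)"
  shows "tbr sg sa br (tcls sg sa f) (tcls sg sa g) = tcls sg sa (fbr br f g)"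
  unfolding tbr_def
proof (rule tcls_eq)
  define f' where "f' = trep (tcls sg sa f)"
  define g' where "g' = trep (tcls sg sa g)"
  have rf: "f' - f \<in> tensor_R sg sa" unfolding f'_def by (rule trep_tcls)
  have rg: "g' - g \<in> tensor_R sg sa" unfolding g'_def by (rule trep_tcls)
  have ff: "finite (fsupp f')" using fin_add[OF R_fin[OF rf] f] by simp
  have fg: "finite (fsupp g')" using fin_add[OF R_fin[OF rg] g] by simp
  have "fbr br f' g' - fbr br f g = fbr br (f' - f) g' + fbr br f (g' - g)"
    by (simp add: fbr_diffL[OF ff f fg] fbr_diffR[OF fg g f])
  moreover have "fbr br (f' - f) g' \<in> tensor_R sg sa"
    by (rule fbr_R_left[OF br_addL br_scL alg rf fg])
  moreover have "fbr br f (g' - g) \<in> tensor_R sg sa"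
    by (rule fbr_R_right[OF br_addR br_scR alg rg f])
  ultimately show "fbr br f' g' - fbr br f g \<in> tensor_R sg sa"
    using R_add by metis
qed

lemma carrier_tcls: "finite (fsupp f) \<Longrightarrow> tcls sg sa f \<in> tensor_carrier sg sa"
  unfolding tensor_carrier_def by blast

lemma good:
  assumes T: "T \<in> N2" and f: "finite (fsupp f)"
    and Z: "\<forall>Y\<in>tensor_carrier sg sa. tbr sg sa br (tcls sg sa f) Y \<in> I"
  shows "tcls sg sa (tl T f) \<in> I"
  using T
proof induction
  case (rbase z)
  have "fbr br f (delta (z, 1)) = tl (\<lambda>v. br v z) f"
    unfolding fbr_def tl_def fsupp_delta by (simp add: delta_def fscale_def)
  hence "tcls sg sa (tl (\<lambda>v. br v z) f) = tbr sg sa br (tcls sg sa f) (tcls sg sa (delta (z, 1)))"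
    using tbr_tcls[OF f fin_delta] by simp
  thus ?case using Z carrier_tcls[OF fin_delta] by simp
next
  case (comp T y)
  have "fbr br (delta (y, 1)) (tl T f) = (\<Sum>q\<in>fsupp f. fscale (f q) (fbr br (delta (y, 1)) (delta (T (fst q), snd q))))"
    unfolding tl_def by (rule fbr_sumR) (use f in auto)
  also have "\<dots> = tl (\<lambda>v. br y (T v)) f"
    unfolding tl_def by (simp add: fbr_delta)
  finally have "tcls sg sa (tl (\<lambda>v. br y (T v)) f) = tbr sg sa br (tcls sg sa (delta (y, 1))) (tcls sg sa (tl T f))"
    using tbr_tcls[OF fin_delta tl_fin] by simp
  thus ?case using I_brL[OF comp.IH carrier_tcls[OF fin_delta]] by simp
next
  case (add T S)
  have "tl (\<lambda>v. T v + S v) f - (tl T f + tl S f) =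
     (\<Sum>q\<in>fsupp f. fscale (f q) (delta (T (fst q) + S (fst q), snd q) - delta (T (fst q), snd q) - delta (S (fst q), snd q)))"
    unfolding tl_def by (simp add: sum.distrib[symmetric] sum_subtractf[symmetric] F.scale_right_diff_distrib diff_diff_add F.scale_right_distrib)
  also have "\<dots> \<in> tensor_R sg sa"
    by (intro R_sum R_sc rels_R) (unfold tensor_rels_def, blast)
  finally have "tcls sg sa (tl (\<lambda>v. T v + S v) f) = tadd sg sa (tcls sg sa (tl T f)) (tcls sg sa (tl S f))"
    by (simp add: tadd_tcls tcls_eq)
  thus ?case using I_add[OF add.IH] by simp
next
  case (scal T c)
  have "tl (\<lambda>v. sg c (T v)) f - fscale c (tl T f) =
     (\<Sum>q\<in>fsupp f. fscale (f q) (delta (sg c (T (fst q)), snd q) - fscale c (delta (T (fst q), snd q))))"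
    unfolding tl_def by (simp add: F.scale_sum_right sum_subtractf[symmetric] F.scale_right_diff_distrib mult.commute)
  also have "\<dots> \<in> tensor_R sg sa"
    by (intro R_sum R_sc rels_R) (unfold tensor_rels_def, blast)
  finally have "tcls sg sa (tl (\<lambda>v. sg c (T v)) f) = tsc sg sa c (tcls sg sa (tl T f))"
    by (simp add: tsc_tcls tcls_eq)
  thus ?case using I_sc[OF scal.IH] by simp
qed

lemma closed: assumes fd: "finite_dim sg"
  shows "closed_ideal (tensor_carrier sg sa) (tbr sg sa br) I"
  unfolding closed_ideal_def lie_Z_def
proof (intro equalityI subsetI)
  fix x assume "x \<in> {x \<in> tensor_carrier sg sa. \<forall>y\<in>tensor_carrier sg sa. tbr sg sa br x y \<in> I}"
  hence x: "x \<in> tensor_carrier sg sa" and Z: "\<forall>y\<in>tensor_carrier sg sa. tbr sg sa br x y \<in> I" by auto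
  from x obtain f where f: "x = tcls sg sa f" "finite (fsupp f)" unfolding tensor_carrier_def by blast
  have "tcls sg sa (tl (\<lambda>v. v) f) \<in> I"
    by (rule good[OF N_N2[OF id_N[OF fd]] f(2)]) (use Z f in simp)
  thus "x \<in> I" using tl_id[OF f(2)] f(1) by simp
next
  fix x assume "x \<in> I"
  thus "x \<in> {x \<in> tensor_carrier sg sa. \<forall>y\<in>tensor_carrier sg sa. tbr sg sa br x y \<in> I}"
    using I_sub I_brR by blast
qed

end

theorem corollary4p4:
  fixes sg :: "'k::field \<Rightarrow> 'g::ab_group_add \<Rightarrow> 'g"
    and br :: "'g \<Rightarrow> 'g \<Rightarrow> 'g"
    and sa :: "'k \<Rightarrow> 'a::comm_ring_1 \<Rightarrow> 'a"
    and I :: "('g \<times> 'a \<Rightarrow> 'k) set set"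
  assumes char: "(2::'k) \<noteq> 0"
    and lie: "lie_algebra sg br"
    and fd: "finite_dim sg"
    and cs: "central_simple_lie sg br"
    and alg: "k_algebra sa"
    and ideal: "lie_ideal (tensor_carrier sg sa) (tadd sg sa) (tsc sg sa) (tbr sg sa br) (tzero sg sa) I"
  shows "closed_ideal (tensor_carrier sg sa) (tbr sg sa br) I"
proof -
  interpret TS sg br sa I
    by unfold_locales (fact lie cs alg ideal)+
  show ?thesis by (rule closed[OF fd])
qed


end
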